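(* Let $K$ be a field of characteristic $0$ and $\mathcal{H}$ a finite-dimensional associative $K$-algebra with $1$ which is split semisimple and symmetric with trace form $\tau\colon\mathcal{H}\to K$, and let $\dagger\colon\mathcal{H}\to\mathcal{H}$, $h\mapsto h^\dagger$, be a $K$-linear anti-involution. Assume $B_0$ is a $\dagger$-symmetric basis of $\mathcal{H}$. For a simple $\mathcal{H}$-module $E$ define $$\nu_E:=\frac{1}{c_E\dim E}\sum_{b\in B_0}\chi_E(b^2).$$ Then $\nu_E\in\{0,\pm1\}$, and: (a) $\nu_E=0$ if and only if $E\not\cong\hat E$; (b) $\nu_E=1$ if and only if $E\cong\hat E$ and there exists a non-degenerate symmetric $\mathcal{H}$-invariant bilinear form on $E$; (c) $\nu_E=-1$ if and only if $E\cong\hat E$ and there exists a non-degenerate alternating $\mathcal{H}$-invariant bilinear form on $E$. In particular $\nu_E$ does not depend on the choice of $B_0$.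
   Context: $\mathrm{Irr}(\mathcal{H})$ denotes the set of simple $\mathcal{H}$-modules up to isomorphism; $\chi_E(h)=\mathrm{trace}(h,E)$. The Schur elements $c_E\in K\setminus\{0\}$ are defined by $\tau=\sum_{E\in\mathrm{Irr}(\mathcal{H})}c_E^{-1}\chi_E$. The contragredient $\hat M$ of a finite-dimensional left $\mathcal{H}$-module $M$ is $\mathrm{Hom}_K(M,K)$ with $(h.f)(m)=f(h^\dagger.m)$. A bilinear form $(\,,)$ on $M$ is $\mathcal{H}$-invariant if $(h.m,m')=(m,h^\dagger.m')$ for all $h\in\mathcal{H}$, $m,m'\in M$. For a basis $B$ of $\mathcal{H}$, the dual basis $B^\vee=\{b^\vee\}$ is defined by $\tau(b'b^\vee)=\delta_{b,b'}$. A basis $B_0$ is $\dagger$-symmetric if $b^\dagger=b^\vee$ for all $b\in B_0$. *)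

theory Defs
  imports Main "Jordan_Normal_Form.Matrix" "Jordan_Normal_Form.Determinant"
begin

definition is_K_algebra :: "('k::field \<Rightarrow> 'h::ring_1 \<Rightarrow> 'h) \<Rightarrow> bool" where
  "is_K_algebra sc \<longleftrightarrow> vector_space sc \<and>
     (\<forall>a x y. sc a (x * y) = sc a x * y \<and> sc a (x * y) = x * sc a y)"

definition is_basis :: "('k::field \<Rightarrow> 'h::ring_1 \<Rightarrow> 'h) \<Rightarrow> 'h set \<Rightarrow> bool" where
  "is_basis sc B \<longleftrightarrow> \<not> module.dependent sc B \<and> module.span sc B = UNIV"

definition left_ideal :: "('k::field \<Rightarrow> 'h::ring_1 \<Rightarrow> 'h) \<Rightarrow> 'h set \<Rightarrow> bool" where
  "left_ideal sc L \<longleftrightarrow> 0 \<in> L \<and> (\<forall>x\<in>L. \<forall>y\<in>L. x + y \<in> L) \<and>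
     (\<forall>a. \<forall>x\<in>L. sc a x \<in> L) \<and> (\<forall>h. \<forall>x\<in>L. h * x \<in> L)"

definition semisimple_alg :: "('k::field \<Rightarrow> 'h::ring_1 \<Rightarrow> 'h) \<Rightarrow> bool" where
  "semisimple_alg sc \<longleftrightarrow> (\<forall>L. left_ideal sc L \<longrightarrow>
     (\<exists>L'. left_ideal sc L' \<and> L \<inter> L' = {0} \<and> {x + y | x y. x \<in> L \<and> y \<in> L'} = UNIV))"

section \<open>Finite-dimensional H-modules, in coordinates (matrix representations)\<close>

definition mat_trace :: "'a::comm_ring_1 mat \<Rightarrow> 'a" where
  "mat_trace A = (\<Sum>i<dim_row A. A $$ (i, i))"

definition is_rep :: "('k::field \<Rightarrow> 'h::ring_1 \<Rightarrow> 'h) \<Rightarrow> nat \<Rightarrow> ('h \<Rightarrow> 'k mat) \<Rightarrow> bool" where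
  "is_rep sc n \<rho> \<longleftrightarrow> (\<forall>h. \<rho> h \<in> carrier_mat n n) \<and> \<rho> 1 = 1\<^sub>m n \<and>
     (\<forall>x y. \<rho> (x * y) = \<rho> x * \<rho> y) \<and> (\<forall>x y. \<rho> (x + y) = \<rho> x + \<rho> y) \<and>
     (\<forall>a x. \<rho> (sc a x) = a \<cdot>\<^sub>m \<rho> x)"

definition invariant_subspace :: "nat \<Rightarrow> ('h \<Rightarrow> 'k::field mat) \<Rightarrow> 'k vec set \<Rightarrow> bool" where
  "invariant_subspace n \<rho> W \<longleftrightarrow> W \<subseteq> carrier_vec n \<and> 0\<^sub>v n \<in> W \<and>
     (\<forall>v\<in>W. \<forall>w\<in>W. v + w \<in> W) \<and> (\<forall>a. \<forall>v\<in>W. a \<cdot>\<^sub>v v \<in> W) \<and>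
     (\<forall>h. \<forall>v\<in>W. \<rho> h *\<^sub>v v \<in> W)"

definition simple_rep :: "('k::field \<Rightarrow> 'h::ring_1 \<Rightarrow> 'h) \<Rightarrow> nat \<Rightarrow> ('h \<Rightarrow> 'k mat) \<Rightarrow> bool" where
  "simple_rep sc n \<rho> \<longleftrightarrow> is_rep sc n \<rho> \<and> n > 0 \<and>
     (\<forall>W. invariant_subspace n \<rho> W \<longrightarrow> W = {0\<^sub>v n} \<or> W = carrier_vec n)"

definition rep_iso :: "nat \<Rightarrow> ('h \<Rightarrow> 'k::field mat) \<Rightarrow> nat \<Rightarrow> ('h \<Rightarrow> 'k mat) \<Rightarrow> bool" where
  "rep_iso n \<rho> m \<sigma> \<longleftrightarrow> n = m \<and>
     (\<exists>P \<in> carrier_mat n n. invertible_mat P \<and> (\<forall>h. P * \<rho> h = \<sigma> h * P))"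

definition split_alg :: "('k::field \<Rightarrow> 'h::ring_1 \<Rightarrow> 'h) \<Rightarrow> bool" where
  "split_alg sc \<longleftrightarrow> (\<forall>n \<rho>. simple_rep sc n \<rho> \<longrightarrow>
     (\<forall>A \<in> carrier_mat n n. (\<forall>h. A * \<rho> h = \<rho> h * A) \<longrightarrow> (\<exists>a. A = a \<cdot>\<^sub>m 1\<^sub>m n)))"

text \<open>Contragredient module Hom_K(K^n,K), written in the dual basis:
  (h.f)(m) = f(h^\<dagger>.m) gives the matrix transpose(\<rho>(h^\<dagger>)).\<close>
definition contragredient :: "('h \<Rightarrow> 'h) \<Rightarrow> ('h \<Rightarrow> 'k::field mat) \<Rightarrow> ('h \<Rightarrow> 'k mat)" where
  "contragredient dag \<rho> = (\<lambda>h. transpose_mat (\<rho> (dag h)))"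

definition bform :: "'k::field mat \<Rightarrow> 'k vec \<Rightarrow> 'k vec \<Rightarrow> 'k" where
  "bform M v w = v \<bullet> (M *\<^sub>v w)"

definition invariant_form :: "('h \<Rightarrow> 'h) \<Rightarrow> nat \<Rightarrow> ('h \<Rightarrow> 'k::field mat) \<Rightarrow> 'k mat \<Rightarrow> bool" where
  "invariant_form dag n \<rho> M \<longleftrightarrow> (\<forall>h. \<forall>v\<in>carrier_vec n. \<forall>w\<in>carrier_vec n.
      bform M (\<rho> h *\<^sub>v v) w = bform M v (\<rho> (dag h) *\<^sub>v w))"

definition nondegenerate_form :: "nat \<Rightarrow> 'k::field mat \<Rightarrow> bool" where
  "nondegenerate_form n M \<longleftrightarrow> (\<forall>v\<in>carrier_vec n.
      (\<forall>w\<in>carrier_vec n. bform M v w = 0) \<longrightarrow> v = 0\<^sub>v n)"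

definition symmetric_form :: "nat \<Rightarrow> 'k::field mat \<Rightarrow> bool" where
  "symmetric_form n M \<longleftrightarrow> (\<forall>v\<in>carrier_vec n. \<forall>w\<in>carrier_vec n. bform M v w = bform M w v)"

definition alternating_form :: "nat \<Rightarrow> 'k::field mat \<Rightarrow> bool" where
  "alternating_form n M \<longleftrightarrow> (\<forall>v\<in>carrier_vec n. bform M v v = 0)"

definition symmetrizing_trace :: "('k::field \<Rightarrow> 'h::ring_1 \<Rightarrow> 'h) \<Rightarrow> ('h \<Rightarrow> 'k) \<Rightarrow> bool" where
  "symmetrizing_trace sc \<tau> \<longleftrightarrow> Vector_Spaces.linear sc (*) \<tau> \<and>
     (\<forall>x y. \<tau> (x * y) = \<tau> (y * x)) \<and> (\<forall>x. (\<forall>y. \<tau> (x * y) = 0) \<longrightarrow> x = 0)"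

definition anti_involution :: "('k::field \<Rightarrow> 'h::ring_1 \<Rightarrow> 'h) \<Rightarrow> ('h \<Rightarrow> 'h) \<Rightarrow> bool" where
  "anti_involution sc dag \<longleftrightarrow> Vector_Spaces.linear sc sc dag \<and>
     (\<forall>x y. dag (x * y) = dag y * dag x) \<and> (\<forall>x. dag (dag x) = x)"

text \<open>B is \<dagger>-symmetric: b^\<dagger> = b^\<or>, i.e. \<tau>(b' b^\<dagger>) = \<delta>_{b,b'} (the defining property of
  the dual basis element b^\<or>).\<close>
definition dag_symmetric_basis ::
  "('k::field \<Rightarrow> 'h::ring_1 \<Rightarrow> 'h) \<Rightarrow> ('h \<Rightarrow> 'k) \<Rightarrow> ('h \<Rightarrow> 'h) \<Rightarrow> 'h set \<Rightarrow> bool" where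
  "dag_symmetric_basis sc \<tau> dag B \<longleftrightarrow> is_basis sc B \<and>
     (\<forall>b\<in>B. \<forall>b'\<in>B. \<tau> (b' * dag b) = (if b = b' then 1 else 0))"

definition nu :: "'h::ring_1 set \<Rightarrow> 'k::field \<Rightarrow> nat \<Rightarrow> ('h \<Rightarrow> 'k mat) \<Rightarrow> 'k" where
  "nu B c n \<rho> = (1 / (c * of_nat n)) * (\<Sum>b\<in>B. mat_trace (\<rho> (b * b)))"

end

theory Submission
  imports Defs
begin


locale FSalg =
  fixes sc :: "'k::field_char_0 \<Rightarrow> 'h::ring_1 \<Rightarrow> 'h"
    and \<tau> :: "'h \<Rightarrow> 'k" and dag :: "'h \<Rightarrow> 'h" and B :: "'h set"
  assumes alg: "is_K_algebra sc"
    and sym: "symmetrizing_trace sc \<tau>"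
    and dag: "anti_involution sc dag"
    and Bfin: "finite B" and Bsym: "dag_symmetric_basis sc \<tau> dag B"
begin

lemma vs: "vector_space sc" using alg unfolding is_K_algebra_def by auto

lemma sc_add: "sc a (x + y) = sc a x + sc a y"
  using vs unfolding vector_space_def by auto
lemma sc_zero: "sc 0 x = 0"
  using vs by (simp add: module.scale_zero_left module_iff_vector_space)
lemma sc_zero_right: "sc a 0 = 0"
  using sc_add[of a 0 0] by simp
lemma sc_mult_left: "sc a x * y = sc a (x * y)"
  using alg unfolding is_K_algebra_def by auto
lemma sc_mult_right: "x * sc a y = sc a (x * y)"
  using alg unfolding is_K_algebra_def by metis

lemma tau_add: "\<tau> (x + y) = \<tau> x + \<tau> y"
  using sym unfolding symmetrizing_trace_def Vector_Spaces.linear_iff by auto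
lemma tau_sc: "\<tau> (sc a x) = a * \<tau> x"
  using sym unfolding symmetrizing_trace_def Vector_Spaces.linear_iff by auto
lemma tau_comm: "\<tau> (x * y) = \<tau> (y * x)"
  using sym unfolding symmetrizing_trace_def by auto
lemma tau_sum: "\<tau> (sum f S) = (\<Sum>s\<in>S. \<tau> (f s))"
proof (induction S rule: infinite_finite_induct)
  case (infinite A) thus ?case using tau_sc[of 0 0] sc_zero[of 0] by simp
next
  case (empty) show ?case using tau_sc[of 0 0] sc_zero[of 0] by simp
qed (auto simp: tau_add)

lemma dag_add: "dag (x + y) = dag x + dag y"
  using dag unfolding anti_involution_def Vector_Spaces.linear_iff by auto
lemma dag_sc: "dag (sc a x) = sc a (dag x)"
  using dag unfolding anti_involution_def Vector_Spaces.linear_iff by auto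
lemma dag_dag[simp]: "dag (dag x) = x"
  using dag unfolding anti_involution_def by auto
lemma dag_mult: "dag (x * y) = dag y * dag x"
  using dag unfolding anti_involution_def by auto
lemma dag_zero: "dag 0 = 0"
  using dag_add[of 0 0] by simp
lemma dag_sum: "dag (sum f S) = (\<Sum>s\<in>S. dag (f s))"
  by (induction S rule: infinite_finite_induct) (auto simp: dag_add dag_zero)
lemma dag_one: "dag 1 = 1"
proof -
  have "dag (dag 1 * 1) = dag 1 * dag (dag 1)" by (rule dag_mult)
  hence "dag (dag 1) = dag 1 * 1" by simp
  thus ?thesis by simp
qed

lemma Bdual: "b \<in> B \<Longrightarrow> b' \<in> B \<Longrightarrow> \<tau> (b' * dag b) = (if b = b' then 1 else 0)"
  using Bsym unfolding dag_symmetric_basis_def by auto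

lemma span_rep: "\<exists>u. x = (\<Sum>v\<in>B. sc (u v) v)"
proof -
  have "module.span sc B = UNIV" using Bsym unfolding dag_symmetric_basis_def is_basis_def by auto
  moreover have "Modules.module sc" using vs module_iff_vector_space by auto
  ultimately have "x \<in> range (\<lambda>u. \<Sum>v\<in>B. sc (u v) v)"
    using module.span_finite[OF _ Bfin] by auto
  thus ?thesis by auto
qed

lemma E1: "x = (\<Sum>b\<in>B. sc (\<tau> (x * dag b)) b)"
proof -
  obtain u where u: "x = (\<Sum>v\<in>B. sc (u v) v)" using span_rep by auto
  have "\<tau> (x * dag b) = u b" if b: "b \<in> B" for b
  proof -
    have "\<tau> (x * dag b) = (\<Sum>v\<in>B. u v * \<tau> (v * dag b))"
      unfolding u sum_distrib_right tau_sum by (simp add: sc_mult_left tau_sc)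
    also have "\<dots> = (\<Sum>v\<in>B. if v = b then u v else 0)"
      by (rule sum.cong, auto simp: Bdual b)
    also have "\<dots> = u b" using b Bfin by simp
    finally show ?thesis .
  qed
  hence "(\<Sum>b\<in>B. sc (\<tau> (x * dag b)) b) = (\<Sum>v\<in>B. sc (u v) v)" by (intro sum.cong) auto
  with u show ?thesis by simp
qed

lemma E2: "x = (\<Sum>b\<in>B. sc (\<tau> (b * x)) (dag b))"
proof -
  obtain u where u: "dag x = (\<Sum>v\<in>B. sc (u v) v)" using span_rep by auto
  have "x = dag (dag x)" by simp
  also have "\<dots> = (\<Sum>v\<in>B. sc (u v) (dag v))" unfolding u dag_sum dag_sc ..
  finally have u': "x = (\<Sum>v\<in>B. sc (u v) (dag v))" .
  have "\<tau> (b * x) = u b" if b: "b \<in> B" for b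
  proof -
    have "\<tau> (b * x) = (\<Sum>v\<in>B. u v * \<tau> (b * dag v))"
      unfolding u' sum_distrib_left tau_sum by (simp add: sc_mult_right tau_sc)
    also have "\<dots> = (\<Sum>v\<in>B. if v = b then u v else 0)"
      by (rule sum.cong, auto simp: Bdual b)
    also have "\<dots> = u b" using b Bfin by simp
    finally show ?thesis .
  qed
  hence "(\<Sum>b\<in>B. sc (\<tau> (b * x)) (dag b)) = (\<Sum>v\<in>B. sc (u v) (dag v))" by (intro sum.cong) auto
  with u' show ?thesis by simp
qed

lemma rep_carrier: "is_rep sc n \<rho> \<Longrightarrow> \<rho> h \<in> carrier_mat n n"
  unfolding is_rep_def by auto
lemma rep_add: "is_rep sc n \<rho> \<Longrightarrow> \<rho> (x + y) = \<rho> x + \<rho> y"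
  unfolding is_rep_def by auto
lemma rep_mult: "is_rep sc n \<rho> \<Longrightarrow> \<rho> (x * y) = \<rho> x * \<rho> y"
  unfolding is_rep_def by auto
lemma rep_one: "is_rep sc n \<rho> \<Longrightarrow> \<rho> 1 = 1\<^sub>m n"
  unfolding is_rep_def by auto
lemma rep_sc_entry: "is_rep sc n \<rho> \<Longrightarrow> k < n \<Longrightarrow> l < n \<Longrightarrow> \<rho> (sc a x) $$ (k,l) = a * \<rho> x $$ (k,l)"
proof -
  assume r: "is_rep sc n \<rho>" and kl: "k < n" "l < n"
  have "\<rho> (sc a x) = a \<cdot>\<^sub>m \<rho> x" using r unfolding is_rep_def by auto
  moreover have "\<rho> x \<in> carrier_mat n n" using rep_carrier[OF r] .
  ultimately show ?thesis using kl by simp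
qed
lemma rep_zero_entry: "is_rep sc n \<rho> \<Longrightarrow> k < n \<Longrightarrow> l < n \<Longrightarrow> \<rho> 0 $$ (k,l) = 0"
  using rep_sc_entry[of n \<rho> k l 0 0] sc_zero[of 0] by simp
lemma rep_add_entry: "is_rep sc n \<rho> \<Longrightarrow> k < n \<Longrightarrow> l < n \<Longrightarrow> \<rho> (x + y) $$ (k,l) = \<rho> x $$ (k,l) + \<rho> y $$ (k,l)"
  using rep_add[of n \<rho> x y] rep_carrier[of n \<rho> x] rep_carrier[of n \<rho> y] by simp
lemma rep_sum_entry: assumes "is_rep sc n \<rho>" "k < n" "l < n"
  shows "\<rho> (sum f S) $$ (k,l) = (\<Sum>s\<in>S. \<rho> (f s) $$ (k,l))"
  by (induction S rule: infinite_finite_induct) (auto simp: rep_zero_entry[OF assms] rep_add_entry[OF assms])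
lemma rep_lincomb_entry: assumes "is_rep sc n \<rho>" "k < n" "l < n"
  shows "\<rho> (\<Sum>s\<in>S. sc (f s) (g s)) $$ (k,l) = (\<Sum>s\<in>S. f s * \<rho> (g s) $$ (k,l))"
  by (simp add: rep_sum_entry[OF assms] rep_sc_entry[OF assms])
lemma rep_mult_entry: assumes "is_rep sc n \<rho>" "k < n" "l < n"
  shows "\<rho> (x * y) $$ (k,l) = (\<Sum>r=0..<n. \<rho> x $$ (k,r) * \<rho> y $$ (r,l))"
proof -
  have c: "\<rho> x \<in> carrier_mat n n" "\<rho> y \<in> carrier_mat n n" using rep_carrier[OF assms(1)] by auto
  show ?thesis using assms c by (simp add: rep_mult[OF assms(1)] scalar_prod_def)
qed

definition Tt :: "('h \<Rightarrow> 'k mat) \<Rightarrow> ('h \<Rightarrow> 'k mat) \<Rightarrow> nat \<Rightarrow> nat \<Rightarrow> nat \<Rightarrow> nat \<Rightarrow> 'k" where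
  "Tt \<rho> \<sigma> k p l q = (\<Sum>b\<in>B. \<rho> b $$ (k,p) * \<sigma> (dag b) $$ (l,q))"

lemma K1: assumes r: "is_rep sc n \<rho>" and s: "is_rep sc m \<sigma>"
  and k: "k < n" and p: "p < n" and l: "l < m" and q: "q < m"
  shows "(\<Sum>r=0..<n. \<rho> h $$ (k,r) * Tt \<rho> \<sigma> r p l q) = (\<Sum>r=0..<m. Tt \<rho> \<sigma> k p l r * \<sigma> h $$ (r,q))"
proof -
  have "(\<Sum>r=0..<n. \<rho> h $$ (k,r) * Tt \<rho> \<sigma> r p l q)
     = (\<Sum>b\<in>B. (\<Sum>r=0..<n. \<rho> h $$ (k,r) * \<rho> b $$ (r,p)) * \<sigma> (dag b) $$ (l,q))"
    unfolding Tt_def sum_distrib_left sum_distrib_right by (subst sum.swap) (simp add: ac_simps)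
  also have "\<dots> = (\<Sum>b\<in>B. \<rho> (h * b) $$ (k,p) * \<sigma> (dag b) $$ (l,q))"
    by (simp add: rep_mult_entry[OF r k p])
  also have "\<dots> = (\<Sum>b\<in>B. (\<Sum>b'\<in>B. \<tau> (h * b * dag b') * \<rho> b' $$ (k,p)) * \<sigma> (dag b) $$ (l,q))"
    by (subst E1[of "h * _"], simp add: rep_lincomb_entry[OF r k p])
  also have "\<dots> = (\<Sum>b\<in>B. \<Sum>b'\<in>B. \<tau> (h * b * dag b') * \<rho> b' $$ (k,p) * \<sigma> (dag b) $$ (l,q))"
    by (simp add: sum_distrib_right)
  finally have L: "(\<Sum>r=0..<n. \<rho> h $$ (k,r) * Tt \<rho> \<sigma> r p l q) = \<dots>" .
  have "(\<Sum>r=0..<m. Tt \<rho> \<sigma> k p l r * \<sigma> h $$ (r,q))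
     = (\<Sum>b\<in>B. \<rho> b $$ (k,p) * (\<Sum>r=0..<m. \<sigma> (dag b) $$ (l,r) * \<sigma> h $$ (r,q)))"
    unfolding Tt_def sum_distrib_left sum_distrib_right by (subst sum.swap) (simp add: ac_simps)
  also have "\<dots> = (\<Sum>b\<in>B. \<rho> b $$ (k,p) * \<sigma> (dag b * h) $$ (l,q))"
    by (simp add: rep_mult_entry[OF s l q])
  also have "\<dots> = (\<Sum>b\<in>B. \<rho> b $$ (k,p) * (\<Sum>b'\<in>B. \<tau> (b' * (dag b * h)) * \<sigma> (dag b') $$ (l,q)))"
    by (subst E2[of "dag _ * h"], simp add: rep_lincomb_entry[OF s l q])
  also have "\<dots> = (\<Sum>b\<in>B. \<Sum>b'\<in>B. \<tau> (b' * (dag b * h)) * \<rho> b $$ (k,p) * \<sigma> (dag b') $$ (l,q))"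
    by (simp add: sum_distrib_left ac_simps)
  also have "\<dots> = (\<Sum>b'\<in>B. \<Sum>b\<in>B. \<tau> (b' * (dag b * h)) * \<rho> b $$ (k,p) * \<sigma> (dag b') $$ (l,q))"
    by (rule sum.swap)
  also have "\<dots> = (\<Sum>b\<in>B. \<Sum>b'\<in>B. \<tau> (h * b * dag b') * \<rho> b' $$ (k,p) * \<sigma> (dag b) $$ (l,q))"
  proof -
    have "\<tau> (b' * (dag b * h)) = \<tau> (h * b' * dag b)" for b b'
      using tau_comm[of h "b' * dag b"] by (simp add: mult.assoc)
    thus ?thesis by simp
  qed
  finally show ?thesis using L by simp
qed

end



lemma mult_unit_entry: assumes "(X :: 'a :: field mat) \<in> carrier_mat n m" "i < n" "j < m"
  shows "(X *\<^sub>v unit_vec m j) $ i = X $$ (i,j)"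
proof -
  have "row X i \<bullet> unit_vec m j = row X i $ j" by (rule scalar_prod_right_unit[OF assms(3)])
  thus ?thesis using assms by simp
qed

lemma mat_zero_if_unit: assumes X: "(X :: 'a :: field mat) \<in> carrier_mat n m"
  and h: "\<And>j. j < m \<Longrightarrow> X *\<^sub>v unit_vec m j = 0\<^sub>v n"
  shows "X = 0\<^sub>m n m"
proof (rule eq_matI)
  fix i j assume "i < dim_row (0\<^sub>m n m)" "j < dim_col (0\<^sub>m n m)"
  hence ij: "i < n" "j < m" by auto
  have "X $$ (i,j) = (X *\<^sub>v unit_vec m j) $ i" using mult_unit_entry[OF X ij] by simp
  also have "\<dots> = 0" using h[OF ij(2)] ij by simp
  finally show "X $$ (i,j) = 0\<^sub>m n m $$ (i,j)" using ij by simp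
qed (use X in auto)

lemma vec_zero_if_unit: assumes v: "(v :: 'a :: field vec) \<in> carrier_vec n"
  and h: "\<And>k. k < n \<Longrightarrow> v \<bullet> unit_vec n k = 0"
  shows "v = 0\<^sub>v n"
proof (rule eq_vecI)
  fix i assume "i < dim_vec (0\<^sub>v n)" hence i: "i < n" by simp
  have "v \<bullet> unit_vec n i = v $ i" by (rule scalar_prod_right_unit[OF i])
  thus "v $ i = 0\<^sub>v n $ i" using h[OF i] i by simp
qed (use v in simp)

lemma inj_dim: assumes X: "(X :: 'a :: field mat) \<in> carrier_mat n m"
  and inj: "\<And>v. v \<in> carrier_vec m \<Longrightarrow> X *\<^sub>v v = 0\<^sub>v n \<Longrightarrow> v = 0\<^sub>v m"
  shows "m \<le> n"
proof (rule ccontr)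
  assume "\<not> m \<le> n" hence nm: "n < m" by simp
  define Y where "Y = mat m m (\<lambda>(i,j). if i < n then X $$ (i,j) else 0)"
  have Y: "Y \<in> carrier_mat m m" unfolding Y_def by simp
  have YT: "transpose_mat Y \<in> carrier_mat m m" using Y by simp
  have "transpose_mat Y *\<^sub>v unit_vec m (m - 1) = 0\<^sub>v m"
  proof (rule eq_vecI)
    fix i assume "i < dim_vec (0\<^sub>v m)" hence i: "i < m" by simp
    have "(transpose_mat Y *\<^sub>v unit_vec m (m - 1)) $ i = transpose_mat Y $$ (i, m - 1)"
      using mult_unit_entry[OF YT i] nm by simp
    also have "\<dots> = 0" using i nm unfolding Y_def by simp
    finally show "(transpose_mat Y *\<^sub>v unit_vec m (m - 1)) $ i = 0\<^sub>v m $ i" using i by simp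
  qed (use YT in auto)
  moreover have "unit_vec m (m - 1) \<noteq> 0\<^sub>v m" using nm by simp
  ultimately have "det (transpose_mat Y) = 0"
    using det_0_iff_vec_prod_zero_field[OF YT] unit_vec_carrier by blast
  hence "det Y = 0" using det_transpose[OF Y] by simp
  then obtain v where v: "v \<in> carrier_vec m" "v \<noteq> 0\<^sub>v m" "Y *\<^sub>v v = 0\<^sub>v m"
    using det_0_iff_vec_prod_zero_field[OF Y] by blast
  have "X *\<^sub>v v = 0\<^sub>v n"
  proof (rule eq_vecI)
    fix i assume "i < dim_vec (0\<^sub>v n)" hence i: "i < n" by simp
    have "(Y *\<^sub>v v) $ i = 0" using v(3) i nm by simp
    moreover have "(Y *\<^sub>v v) $ i = (X *\<^sub>v v) $ i"
      using i nm X v(1) unfolding Y_def by (simp add: scalar_prod_def row_def)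
    ultimately show "(X *\<^sub>v v) $ i = 0\<^sub>v n $ i" using i by simp
  qed (use X in auto)
  with inj v show False by auto
qed

lemma surj_transpose_inj: assumes X: "(X :: 'a :: field mat) \<in> carrier_mat n m"
  and surj: "\<And>u. u \<in> carrier_vec n \<Longrightarrow> \<exists>v\<in>carrier_vec m. X *\<^sub>v v = u"
  and v: "v \<in> carrier_vec n" and z: "transpose_mat X *\<^sub>v v = 0\<^sub>v m"
  shows "v = 0\<^sub>v n"
proof (rule vec_zero_if_unit[OF v])
  fix k assume k: "k < n"
  obtain w where w: "w \<in> carrier_vec m" "X *\<^sub>v w = unit_vec n k" using surj[of "unit_vec n k"] by auto
  have "v \<bullet> unit_vec n k = v \<bullet> (X *\<^sub>v w)" using w by simp
  also have "\<dots> = (transpose_mat X *\<^sub>v v) \<bullet> w" using transpose_vec_mult_scalar[OF X w(1) v] by simp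
  also have "\<dots> = 0" using z w by simp
  finally show "v \<bullet> unit_vec n k = 0" .
qed

lemma surj_dim: assumes X: "(X :: 'a :: field mat) \<in> carrier_mat n m"
  and surj: "\<And>u. u \<in> carrier_vec n \<Longrightarrow> \<exists>v\<in>carrier_vec m. X *\<^sub>v v = u"
  shows "n \<le> m"
  using inj_dim[of "transpose_mat X" m n] surj_transpose_inj[OF X surj] X by auto

lemma inj_det: assumes X: "(X :: 'a :: field mat) \<in> carrier_mat n n"
  and inj: "\<And>v. v \<in> carrier_vec n \<Longrightarrow> X *\<^sub>v v = 0\<^sub>v n \<Longrightarrow> v = 0\<^sub>v n"
  shows "det X \<noteq> 0"
  using det_0_iff_vec_prod_zero_field[OF X] inj by blast

lemma det_inverse: assumes X: "(X :: 'a :: field mat) \<in> carrier_mat n n" and d: "det X \<noteq> 0"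
  shows "\<exists>Y\<in>carrier_mat n n. X * Y = 1\<^sub>m n \<and> Y * X = 1\<^sub>m n"
  using det_non_zero_imp_unit[OF X d, of "()"] unfolding Units_def ring_mat_def by auto

lemma det_invertible: assumes X: "(X :: 'a :: field mat) \<in> carrier_mat n n" and d: "det X \<noteq> 0"
  shows "invertible_mat X"
proof -
  obtain Y where Y: "Y \<in> carrier_mat n n" "X * Y = 1\<^sub>m n" "Y * X = 1\<^sub>m n" using det_inverse[OF X d] by auto
  show ?thesis unfolding invertible_mat_def inverts_mat_def square_mat.simps
    using X Y by (intro conjI exI[of _ Y]) auto
qed

lemma surj_det: assumes X: "(X :: 'a :: field mat) \<in> carrier_mat n n"
  and surj: "\<And>u. u \<in> carrier_vec n \<Longrightarrow> \<exists>v\<in>carrier_vec n. X *\<^sub>v v = u"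
  shows "det X \<noteq> 0"
proof -
  have "det (transpose_mat X) \<noteq> 0"
    by (rule inj_det, use X in simp, rule surj_transpose_inj[OF X surj], auto)
  thus ?thesis using det_transpose[OF X] by simp
qed




context FSalg begin

lemma K1mat: assumes r: "is_rep sc n \<rho>" and s: "is_rep sc m \<sigma>" and p: "p < n" and l: "l < m"
  shows "\<rho> h * mat n m (\<lambda>(k,q). Tt \<rho> \<sigma> k p l q) = mat n m (\<lambda>(k,q). Tt \<rho> \<sigma> k p l q) * \<sigma> h"
proof (rule eq_matI)
  have c: "\<rho> h \<in> carrier_mat n n" "\<sigma> h \<in> carrier_mat m m" using rep_carrier r s by auto
  fix i j assume "i < dim_row (mat n m (\<lambda>(k,q). Tt \<rho> \<sigma> k p l q) * \<sigma> h)"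
    "j < dim_col (mat n m (\<lambda>(k,q). Tt \<rho> \<sigma> k p l q) * \<sigma> h)"
  hence ij: "i < n" "j < m" using c by auto
  have "(\<rho> h * mat n m (\<lambda>(k,q). Tt \<rho> \<sigma> k p l q)) $$ (i,j) = (\<Sum>r=0..<n. \<rho> h $$ (i,r) * Tt \<rho> \<sigma> r p l j)"
    using c ij by (simp add: scalar_prod_def)
  also have "\<dots> = (\<Sum>r=0..<m. Tt \<rho> \<sigma> i p l r * \<sigma> h $$ (r,j))"
    by (rule K1[OF r s ij(1) p l ij(2)])
  also have "\<dots> = (mat n m (\<lambda>(k,q). Tt \<rho> \<sigma> k p l q) * \<sigma> h) $$ (i,j)"
    using c ij by (simp add: scalar_prod_def)
  finally show "(\<rho> h * mat n m (\<lambda>(k,q). Tt \<rho> \<sigma> k p l q)) $$ (i,j) = (mat n m (\<lambda>(k,q). Tt \<rho> \<sigma> k p l q) * \<sigma> h) $$ (i,j)" .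
qed (use rep_carrier[OF r, of h] rep_carrier[OF s, of h] in auto)

lemma S_surj: assumes r: "simple_rep sc n \<rho>" and X: "X \<in> carrier_mat n m"
  and sig: "\<And>h. \<sigma> h \<in> carrier_mat m m"
  and int: "\<And>h. \<rho> h * X = X * \<sigma> h" and nz: "X \<noteq> 0\<^sub>m n m"
  and u: "u \<in> carrier_vec n"
  shows "\<exists>v\<in>carrier_vec m. X *\<^sub>v v = u"
proof -
  have rr: "is_rep sc n \<rho>" using r unfolding simple_rep_def by auto
  define W where "W = (\<lambda>v. X *\<^sub>v v) ` carrier_vec m"
  have "invariant_subspace n \<rho> W"
    unfolding invariant_subspace_def
  proof (intro conjI ballI allI)
    show "W \<subseteq> carrier_vec n" unfolding W_def using X by auto
    have "X *\<^sub>v 0\<^sub>v m = 0\<^sub>v n" using X by (intro eq_vecI) auto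
    thus "0\<^sub>v n \<in> W" unfolding W_def by (metis zero_carrier_vec image_eqI)
    fix v w assume "v \<in> W" "w \<in> W"
    then obtain v' w' where "v' \<in> carrier_vec m" "w' \<in> carrier_vec m" "v = X *\<^sub>v v'" "w = X *\<^sub>v w'"
      unfolding W_def by auto
    hence "v + w = X *\<^sub>v (v' + w')" using mult_add_distrib_mat_vec[OF X, of v' w'] by simp
    moreover have "v' + w' \<in> carrier_vec m" using \<open>v' \<in> carrier_vec m\<close> \<open>w' \<in> carrier_vec m\<close> by simp
    ultimately show "v + w \<in> W" unfolding W_def by blast
  next
    fix a v assume "v \<in> W"
    then obtain v' where "v' \<in> carrier_vec m" "v = X *\<^sub>v v'" unfolding W_def by auto
    hence "a \<cdot>\<^sub>v v = X *\<^sub>v (a \<cdot>\<^sub>v v')" using mult_mat_vec[OF X, of v' a] by simp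
    moreover have "a \<cdot>\<^sub>v v' \<in> carrier_vec m" using \<open>v' \<in> carrier_vec m\<close> by simp
    ultimately show "a \<cdot>\<^sub>v v \<in> W" unfolding W_def by blast
  next
    fix h v assume "v \<in> W"
    then obtain v' where v': "v' \<in> carrier_vec m" "v = X *\<^sub>v v'" unfolding W_def by auto
    have "\<rho> h *\<^sub>v v = (\<rho> h * X) *\<^sub>v v'" using v' X rep_carrier[OF rr, of h] by simp
    also have "\<dots> = X *\<^sub>v (\<sigma> h *\<^sub>v v')" unfolding int using v' X sig[of h] by simp
    finally have eq: "\<rho> h *\<^sub>v v = X *\<^sub>v (\<sigma> h *\<^sub>v v')" .
    have "\<sigma> h *\<^sub>v v' \<in> carrier_vec m" using v' sig[of h] by simp
    thus "\<rho> h *\<^sub>v v \<in> W" unfolding W_def by (rule image_eqI[where f="\<lambda>v. X *\<^sub>v v", OF eq])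
  qed
  hence "W = {0\<^sub>v n} \<or> W = carrier_vec n" using r unfolding simple_rep_def by auto
  moreover have "W \<noteq> {0\<^sub>v n}"
  proof
    assume W0: "W = {0\<^sub>v n}"
    have "X = 0\<^sub>m n m"
      by (rule mat_zero_if_unit[OF X], use W0 in \<open>auto simp: W_def\<close>)
    with nz show False by simp
  qed
  ultimately have "W = carrier_vec n" by simp
  hence "u \<in> (\<lambda>v. X *\<^sub>v v) ` carrier_vec m" using u unfolding W_def by simp
  then obtain v where "v \<in> carrier_vec m" "u = X *\<^sub>v v" by blast
  thus ?thesis by blast
qed

lemma S_inj: assumes s: "simple_rep sc m \<sigma>" and X: "X \<in> carrier_mat n m"
  and rho: "\<And>h. \<rho> h \<in> carrier_mat n n"
  and int: "\<And>h. \<rho> h * X = X * \<sigma> h" and nz: "X \<noteq> 0\<^sub>m n m"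
  and v: "v \<in> carrier_vec m" and z: "X *\<^sub>v v = 0\<^sub>v n"
  shows "v = 0\<^sub>v m"
proof -
  have ss: "is_rep sc m \<sigma>" using s unfolding simple_rep_def by auto
  define W where "W = {v \<in> carrier_vec m. X *\<^sub>v v = 0\<^sub>v n}"
  have z0: "X *\<^sub>v 0\<^sub>v m = 0\<^sub>v n" using X by (intro eq_vecI) auto
  have "invariant_subspace m \<sigma> W"
    unfolding invariant_subspace_def
  proof (intro conjI ballI allI)
    show "W \<subseteq> carrier_vec m" unfolding W_def by auto
    show "0\<^sub>v m \<in> W" unfolding W_def using z0 by simp
    fix v w assume "v \<in> W" "w \<in> W"
    hence vw: "v \<in> carrier_vec m" "w \<in> carrier_vec m" "X *\<^sub>v v = 0\<^sub>v n" "X *\<^sub>v w = 0\<^sub>v n" unfolding W_def by auto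
    have "X *\<^sub>v (v + w) = X *\<^sub>v v + X *\<^sub>v w" by (rule mult_add_distrib_mat_vec[OF X vw(1,2)])
    also have "\<dots> = 0\<^sub>v n" unfolding vw(3,4) by simp
    finally show "v + w \<in> W" unfolding W_def using vw by simp
  next
    fix a v assume "v \<in> W"
    have z: "(a::'k) \<cdot>\<^sub>v 0\<^sub>v n = 0\<^sub>v n" by (intro eq_vecI) auto
    from \<open>v \<in> W\<close> have v: "v \<in> carrier_vec m" "X *\<^sub>v v = 0\<^sub>v n" unfolding W_def by auto
    have "X *\<^sub>v (a \<cdot>\<^sub>v v) = a \<cdot>\<^sub>v (X *\<^sub>v v)" by (rule mult_mat_vec[OF X v(1)])
    also have "\<dots> = 0\<^sub>v n" unfolding v(2) by (rule z)
    finally show "a \<cdot>\<^sub>v v \<in> W" unfolding W_def using v(1) by simp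
  next
    fix h v assume "v \<in> W"
    hence v': "v \<in> carrier_vec m" "X *\<^sub>v v = 0\<^sub>v n" unfolding W_def by auto
    have sh: "\<sigma> h \<in> carrier_mat m m" by (rule rep_carrier[OF ss])
    have "X *\<^sub>v (\<sigma> h *\<^sub>v v) = (X * \<sigma> h) *\<^sub>v v" using v'(1) X sh by simp
    also have "\<dots> = (\<rho> h * X) *\<^sub>v v" unfolding int ..
    also have "\<dots> = \<rho> h *\<^sub>v (X *\<^sub>v v)" by (rule assoc_mult_mat_vec[OF rho[of h] X v'(1)])
    also have "\<dots> = \<rho> h *\<^sub>v 0\<^sub>v n" unfolding v'(2) ..
    also have "\<dots> = 0\<^sub>v n" using rho[of h] by (intro eq_vecI) auto
    finally have "X *\<^sub>v (\<sigma> h *\<^sub>v v) = 0\<^sub>v n" .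
    moreover have "\<sigma> h *\<^sub>v v \<in> carrier_vec m" using v'(1) sh by simp
    ultimately show "\<sigma> h *\<^sub>v v \<in> W" unfolding W_def by simp
  qed
  hence "W = {0\<^sub>v m} \<or> W = carrier_vec m" using s unfolding simple_rep_def by auto
  moreover have "W \<noteq> carrier_vec m"
  proof
    assume W0: "W = carrier_vec m"
    have "X = 0\<^sub>m n m"
    proof (rule mat_zero_if_unit[OF X])
      fix j assume "j < m"
      have "unit_vec m j \<in> W" unfolding W0 by simp
      thus "X *\<^sub>v unit_vec m j = 0\<^sub>v n" unfolding W_def by blast
    qed
    with nz show False by simp
  qed
  ultimately have "W = {0\<^sub>v m}" by simp
  moreover have "v \<in> W" unfolding W_def using v z by blast
  ultimately show ?thesis by blast
qed

lemma contra_rep: assumes r: "is_rep sc n \<rho>"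
  shows "is_rep sc n (contragredient dag \<rho>)"
  unfolding is_rep_def contragredient_def
proof (intro conjI allI)
  show "transpose_mat (\<rho> (dag h)) \<in> carrier_mat n n" for h using rep_carrier[OF r, of "dag h"] by simp
  show "transpose_mat (\<rho> (dag 1)) = 1\<^sub>m n" using rep_one[OF r] dag_one by simp
  show "transpose_mat (\<rho> (dag (x * y))) = transpose_mat (\<rho> (dag x)) * transpose_mat (\<rho> (dag y))" for x y
  proof -
    have "\<rho> (dag (x * y)) = \<rho> (dag y) * \<rho> (dag x)" by (simp only: dag_mult rep_mult[OF r])
    thus ?thesis using transpose_mult[OF rep_carrier[OF r, of "dag y"] rep_carrier[OF r, of "dag x"]] by simp
  qed
  show "transpose_mat (\<rho> (dag (x + y))) = transpose_mat (\<rho> (dag x)) + transpose_mat (\<rho> (dag y))" for x y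
  proof -
    have "\<rho> (dag (x + y)) = \<rho> (dag x) + \<rho> (dag y)" by (simp only: dag_add rep_add[OF r])
    thus ?thesis using transpose_add[OF rep_carrier[OF r, of "dag x"] rep_carrier[OF r, of "dag y"]] by simp
  qed
  show "transpose_mat (\<rho> (dag (sc a x))) = a \<cdot>\<^sub>m transpose_mat (\<rho> (dag x))" for a x
  proof -
    have "\<rho> (dag (sc a x)) = a \<cdot>\<^sub>m \<rho> (dag x)" using r unfolding is_rep_def by (simp only: dag_sc)
    moreover have "\<rho> (dag x) \<in> carrier_mat n n" by (rule rep_carrier[OF r])
    ultimately show ?thesis by (intro eq_matI) auto
  qed
qed

end



locale FS = FSalg sc \<tau> dag B
  for sc :: "'k::field_char_0 \<Rightarrow> 'h::ring_1 \<Rightarrow> 'h" and \<tau> dag B +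
  fixes I :: "'i set" and d :: "'i \<Rightarrow> nat" and \<rho> :: "'i \<Rightarrow> 'h \<Rightarrow> 'k mat" and c :: "'i \<Rightarrow> 'k"
  assumes split: "split_alg sc"
    and Irr_simple: "\<And>j. j \<in> I \<Longrightarrow> simple_rep sc (d j) (\<rho> j)"
    and Irr_distinct: "\<And>j k. j \<in> I \<Longrightarrow> k \<in> I \<Longrightarrow> j \<noteq> k \<Longrightarrow> \<not> rep_iso (d j) (\<rho> j) (d k) (\<rho> k)"
    and Irr_finite: "finite I"
    and schur_nz: "\<And>j. j \<in> I \<Longrightarrow> c j \<noteq> 0"
    and schur: "\<And>h. \<tau> h = (\<Sum>j\<in>I. mat_trace (\<rho> j h) / c j)"
begin

lemma Irr_rep: "j \<in> I \<Longrightarrow> is_rep sc (d j) (\<rho> j)"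
  using Irr_simple unfolding simple_rep_def by auto

lemma zero_offdiag: assumes i: "i \<in> I" and j: "j \<in> I" and ij: "i \<noteq> j"
  and k: "k < d i" and p: "p < d i" and l: "l < d j" and q: "q < d j"
  shows "Tt (\<rho> i) (\<rho> j) k p l q = 0"
proof -
  define X where "X = mat (d i) (d j) (\<lambda>(k,q). Tt (\<rho> i) (\<rho> j) k p l q)"
  have X: "X \<in> carrier_mat (d i) (d j)" unfolding X_def by simp
  have int: "\<And>h. \<rho> i h * X = X * \<rho> j h" unfolding X_def by (rule K1mat[OF Irr_rep[OF i] Irr_rep[OF j] p l])
  have "X = 0\<^sub>m (d i) (d j)"
  proof (rule ccontr)
    assume nz: "X \<noteq> 0\<^sub>m (d i) (d j)"
    have surj: "\<And>u. u \<in> carrier_vec (d i) \<Longrightarrow> \<exists>v\<in>carrier_vec (d j). X *\<^sub>v v = u"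
      by (rule S_surj[OF Irr_simple[OF i] X rep_carrier[OF Irr_rep[OF j]] int nz])
    have inj: "\<And>v. v \<in> carrier_vec (d j) \<Longrightarrow> X *\<^sub>v v = 0\<^sub>v (d i) \<Longrightarrow> v = 0\<^sub>v (d j)"
      by (rule S_inj[OF Irr_simple[OF j] X rep_carrier[OF Irr_rep[OF i]] int nz])
    have e: "d j = d i" using inj_dim[OF X inj] surj_dim[OF X surj] by simp
    have X': "X \<in> carrier_mat (d j) (d j)" using X e by simp
    have "det X \<noteq> 0" by (rule inj_det[OF X'], use inj e in auto)
    hence "invertible_mat X" by (rule det_invertible[OF X'])
    hence "rep_iso (d j) (\<rho> j) (d i) (\<rho> i)" unfolding rep_iso_def using X' e int by metis
    thus False using Irr_distinct[OF j i] ij by auto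
  qed
  hence "X $$ (k,q) = 0" using k q by simp
  thus ?thesis unfolding X_def using k q by simp
qed

lemma diag_scalar: assumes i: "i \<in> I"
  and k: "k < d i" and p: "p < d i" and l: "l < d i" and q: "q < d i"
  shows "Tt (\<rho> i) (\<rho> i) k p l q = (if k = q then Tt (\<rho> i) (\<rho> i) 0 p l 0 else 0)"
proof -
  define X where "X = mat (d i) (d i) (\<lambda>(k,q). Tt (\<rho> i) (\<rho> i) k p l q)"
  have X: "X \<in> carrier_mat (d i) (d i)" unfolding X_def by simp
  have int: "\<And>h. \<rho> i h * X = X * \<rho> i h" unfolding X_def by (rule K1mat[OF Irr_rep[OF i] Irr_rep[OF i] p l])
  obtain a where a: "X = a \<cdot>\<^sub>m 1\<^sub>m (d i)"
    using split Irr_simple[OF i] X int unfolding split_alg_def by metis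
  have "X $$ (k,q) = (if k = q then a else 0)" "X $$ (0,0) = a" using a k q by auto
  thus ?thesis unfolding X_def using k q by simp
qed


lemma tau_expand: "\<tau> h = (\<Sum>j\<in>I. (\<Sum>l<d j. \<rho> j h $$ (l,l)) / c j)"
proof -
  have "mat_trace (\<rho> j h) = (\<Sum>l<d j. \<rho> j h $$ (l,l))" if "j \<in> I" for j
    using rep_carrier[OF Irr_rep[OF that], of h] unfolding mat_trace_def by simp
  thus ?thesis unfolding schur by (intro sum.cong) auto
qed

lemma sum_eq_T: assumes i: "i \<in> I" and k: "k < d i" and p: "p < d i"
  shows "(\<Sum>b\<in>B. \<tau> (dag b) * \<rho> i b $$ (k,p)) = (\<Sum>j\<in>I. (\<Sum>l<d j. Tt (\<rho> i) (\<rho> j) k p l l) / c j)"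
proof -
  have "(\<Sum>b\<in>B. \<tau> (dag b) * \<rho> i b $$ (k,p))
      = (\<Sum>b\<in>B. \<Sum>j\<in>I. \<Sum>l<d j. \<rho> i b $$ (k,p) * \<rho> j (dag b) $$ (l,l) / c j)"
    unfolding tau_expand by (simp add: sum_distrib_right sum_distrib_left sum_divide_distrib ac_simps times_divide_eq_right)
  also have "\<dots> = (\<Sum>j\<in>I. \<Sum>b\<in>B. \<Sum>l<d j. \<rho> i b $$ (k,p) * \<rho> j (dag b) $$ (l,l) / c j)"
    by (rule sum.swap)
  also have "\<dots> = (\<Sum>j\<in>I. \<Sum>l<d j. \<Sum>b\<in>B. \<rho> i b $$ (k,p) * \<rho> j (dag b) $$ (l,l) / c j)"
    by (intro sum.cong refl sum.swap)
  also have "\<dots> = (\<Sum>j\<in>I. (\<Sum>l<d j. Tt (\<rho> i) (\<rho> j) k p l l) / c j)"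
    unfolding Tt_def by (simp add: sum_divide_distrib)
  finally show ?thesis .
qed

lemma ortho: assumes i: "i \<in> I"
  and k: "k < d i" and p: "p < d i" and l: "l < d i" and q: "q < d i"
  shows "Tt (\<rho> i) (\<rho> i) k p l q = (if p = l \<and> k = q then c i else 0)"
proof -
  let ?a = "\<lambda>p l. Tt (\<rho> i) (\<rho> i) 0 p l 0"
  have key: "?a p k = (if k = p then c i else 0)" if k: "k < d i" and p: "p < d i" for k p
  proof -
    have "(if k = p then 1 else 0) = \<rho> i 1 $$ (k,p)" using rep_one[OF Irr_rep[OF i]] k p by simp
    also have "\<dots> = \<rho> i (\<Sum>b\<in>B. sc (\<tau> (1 * dag b)) b) $$ (k,p)" using E1[of 1] by simp
    also have "\<dots> = (\<Sum>b\<in>B. \<tau> (dag b) * \<rho> i b $$ (k,p))"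
      by (simp add: rep_lincomb_entry[OF Irr_rep[OF i] k p])
    also have "\<dots> = (\<Sum>j\<in>I. (\<Sum>l<d j. Tt (\<rho> i) (\<rho> j) k p l l) / c j)"
      by (rule sum_eq_T[OF i k p])
    also have "\<dots> = (\<Sum>l<d i. Tt (\<rho> i) (\<rho> i) k p l l) / c i + (\<Sum>j\<in>I - {i}. (\<Sum>l<d j. Tt (\<rho> i) (\<rho> j) k p l l) / c j)"
      by (rule sum.remove[OF Irr_finite i])
    also have "(\<Sum>j\<in>I - {i}. (\<Sum>l<d j. Tt (\<rho> i) (\<rho> j) k p l l) / c j) = 0"
      by (rule sum.neutral, auto simp: zero_offdiag[OF i _ _ k p])
    also have "(\<Sum>l<d i. Tt (\<rho> i) (\<rho> i) k p l l) = (\<Sum>l<d i. if k = l then ?a p l else 0)"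
      by (rule sum.cong, auto simp: diag_scalar[OF i k p])
    also have "\<dots> = ?a p k" using k by simp
    finally have "(if k = p then 1 else 0) = ?a p k / c i" by simp
    thus ?thesis using schur_nz[OF i] by (auto simp: field_simps split: if_splits)
  qed
  show ?thesis using diag_scalar[OF i k p l q] key[OF l p] by auto
qed

end



context FS begin

lemma contra_entry: assumes r: "is_rep sc n R" and k: "k < n" and l: "l < n"
  shows "contragredient dag R (dag b) $$ (k,l) = R b $$ (l,k)"
  using rep_carrier[OF r, of b] k l unfolding contragredient_def by simp

lemma chi_sum: assumes r: "is_rep sc n R"
  shows "(\<Sum>b\<in>B. mat_trace (R (b * b))) = (\<Sum>k<n. \<Sum>l<n. \<Sum>b\<in>B. R b $$ (k,l) * R b $$ (l,k))"
proof -
  have "mat_trace (R (b * b)) = (\<Sum>k<n. \<Sum>l<n. R b $$ (k,l) * R b $$ (l,k))" for b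
    unfolding mat_trace_def using rep_carrier[OF r, of "b*b"]
    by (simp add: rep_mult_entry[OF r] atLeast0LessThan)
  hence "(\<Sum>b\<in>B. mat_trace (R (b * b))) = (\<Sum>b\<in>B. \<Sum>k<n. \<Sum>l<n. R b $$ (k,l) * R b $$ (l,k))" by simp
  also have "\<dots> = (\<Sum>k<n. \<Sum>b\<in>B. \<Sum>l<n. R b $$ (k,l) * R b $$ (l,k))" by (rule sum.swap)
  also have "\<dots> = (\<Sum>k<n. \<Sum>l<n. \<Sum>b\<in>B. R b $$ (k,l) * R b $$ (l,k))" by (intro sum.cong refl sum.swap)
  finally show ?thesis .
qed

lemma noniso_T_zero: assumes r: "simple_rep sc n R"
  and ni: "\<not> rep_iso n R n (contragredient dag R)"
  and p: "p < n" and l: "l < n" and k: "k < n" and q: "q < n"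
  shows "Tt R (contragredient dag R) k p l q = 0"
proof -
  let ?Rh = "contragredient dag R"
  have rr: "is_rep sc n R" using r unfolding simple_rep_def by auto
  have rh: "is_rep sc n ?Rh" by (rule contra_rep[OF rr])
  define X where "X = mat n n (\<lambda>(k,q). Tt R ?Rh k p l q)"
  have X: "X \<in> carrier_mat n n" unfolding X_def by simp
  have int: "\<And>h. R h * X = X * ?Rh h" unfolding X_def by (rule K1mat[OF rr rh p l])
  have "X = 0\<^sub>m n n"
  proof (rule ccontr)
    assume nz: "X \<noteq> 0\<^sub>m n n"
    have surj: "\<And>u. u \<in> carrier_vec n \<Longrightarrow> \<exists>v\<in>carrier_vec n. X *\<^sub>v v = u"
      by (rule S_surj[OF r X rep_carrier[OF rh] int nz])
    have "det X \<noteq> 0" by (rule surj_det[OF X surj])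
    then obtain Y where Y: "Y \<in> carrier_mat n n" "X * Y = 1\<^sub>m n" "Y * X = 1\<^sub>m n"
      using det_inverse[OF X] by blast
    have iY: "invertible_mat Y" unfolding invertible_mat_def inverts_mat_def
      using Y X by (intro conjI exI[of _ X]) auto
    have "Y * R h = ?Rh h * Y" for h
    proof -
      have Rh: "R h \<in> carrier_mat n n" "?Rh h \<in> carrier_mat n n" using rep_carrier rr rh by auto
      have "Y * R h = Y * R h * (X * Y)" using Y Rh by simp
      also have "\<dots> = Y * (R h * X) * Y" using Y(1) Rh X by (simp add: assoc_mult_mat[of _ n n _ n _ n])
      also have "\<dots> = Y * (X * ?Rh h) * Y" unfolding int ..
      also have "\<dots> = (Y * X) * ?Rh h * Y" using Y(1) Rh X by (simp add: assoc_mult_mat[of _ n n _ n _ n])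
      also have "\<dots> = ?Rh h * Y" unfolding Y(3) using Y Rh by simp
      finally show ?thesis .
    qed
    hence "rep_iso n R n ?Rh" unfolding rep_iso_def using Y iY by blast
    with ni show False by simp
  qed
  hence "X $$ (k,q) = 0" using k q by simp
  thus ?thesis unfolding X_def using k q by simp
qed

lemma noniso_sum: assumes i: "i \<in> I"
  and ni: "\<not> rep_iso (d i) (\<rho> i) (d i) (contragredient dag (\<rho> i))"
  shows "(\<Sum>b\<in>B. mat_trace (\<rho> i (b * b))) = 0"
proof -
  have rr: "is_rep sc (d i) (\<rho> i)" by (rule Irr_rep[OF i])
  have "(\<Sum>b\<in>B. \<rho> i b $$ (k,l) * \<rho> i b $$ (l,k)) = 0" if k: "k < d i" and l: "l < d i" for k l
  proof -
    have "(\<Sum>b\<in>B. \<rho> i b $$ (k,l) * \<rho> i b $$ (l,k)) = Tt (\<rho> i) (contragredient dag (\<rho> i)) k l k l"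
      unfolding Tt_def by (simp add: contra_entry[OF rr k l])
    also have "\<dots> = 0" by (rule noniso_T_zero[OF Irr_simple[OF i] ni l k k l])
    finally show ?thesis .
  qed
  thus ?thesis unfolding chi_sum[OF rr] by simp
qed

end



lemma inv_of: assumes P: "(P :: 'a :: field mat) \<in> carrier_mat n n" and iP: "invertible_mat P"
  shows "\<exists>Q\<in>carrier_mat n n. P * Q = 1\<^sub>m n \<and> Q * P = 1\<^sub>m n"
proof -
  obtain Q where Q: "P * Q = 1\<^sub>m (dim_row P)" "Q * P = 1\<^sub>m (dim_row Q)"
    using iP unfolding invertible_mat_def inverts_mat_def by auto
  have "dim_col (P * Q) = n" using Q(1) P by simp
  hence "dim_col Q = n" by simp
  moreover have "dim_col (Q * P) = n" using P by simp
  hence "dim_row Q = n" using Q(2) by (metis index_one_mat(3))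
  ultimately show ?thesis using Q P by (intro bexI[of _ Q]) auto
qed

context FS begin

lemma iso_conj: assumes r: "is_rep sc n R" and P: "P \<in> carrier_mat n n" and Q: "Q \<in> carrier_mat n n"
  and PQ: "P * Q = 1\<^sub>m n" "Q * P = 1\<^sub>m n" and int: "\<And>h. P * R h = contragredient dag R h * P"
  shows "contragredient dag R h = P * R h * Q" "R h * Q = Q * contragredient dag R h"
proof -
  let ?Rh = "contragredient dag R"
  have Rh: "R h \<in> carrier_mat n n" "?Rh h \<in> carrier_mat n n" using rep_carrier r contra_rep[OF r] by auto
  have "P * R h * Q = ?Rh h * P * Q" unfolding int ..
  also have "\<dots> = ?Rh h" using Rh P Q by (simp add: PQ(1))
  finally show "?Rh h = P * R h * Q" by simp
  have "R h * Q = Q * P * R h * Q" unfolding PQ(2) using Rh Q by simp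
  also have "\<dots> = Q * (P * R h) * Q" using Rh P Q by (simp add: assoc_mult_mat[of _ n n _ n _ n])
  also have "\<dots> = Q * (?Rh h * P) * Q" unfolding int ..
  also have "\<dots> = Q * ?Rh h * (P * Q)" using Rh P Q by (simp add: assoc_mult_mat[of _ n n _ n _ n])
  also have "\<dots> = Q * ?Rh h" unfolding PQ(1) using Rh Q by simp
  finally show "R h * Q = Q * ?Rh h" .
qed

lemma triple_entry: assumes "P \<in> carrier_mat n n" "A \<in> carrier_mat n n" "Q \<in> carrier_mat n n" "k < n" "l < n"
  shows "(P * A * Q) $$ (k,l) = (\<Sum>s=0..<n. \<Sum>r=0..<n. P $$ (k,r) * A $$ (r,s) * Q $$ (s,l))"
proof -
  have "(P * A * Q) $$ (k,l) = (\<Sum>r=0..<n. \<Sum>s=0..<n. P $$ (k,r) * A $$ (r,s) * Q $$ (s,l))"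
    using assms by (simp add: scalar_prod_def sum_distrib_left mult.assoc)
  also have "\<dots> = (\<Sum>s=0..<n. \<Sum>r=0..<n. P $$ (k,r) * A $$ (r,s) * Q $$ (s,l))" by (rule sum.swap)
  finally show ?thesis .
qed

lemma iso_entry_sum: assumes i: "i \<in> I" and P: "P \<in> carrier_mat (d i) (d i)" and Q: "Q \<in> carrier_mat (d i) (d i)"
  and PQ: "P * Q = 1\<^sub>m (d i)" "Q * P = 1\<^sub>m (d i)"
  and int: "\<And>h. P * \<rho> i h = contragredient dag (\<rho> i) h * P"
  and k: "k < d i" and l: "l < d i"
  shows "(\<Sum>b\<in>B. \<rho> i b $$ (k,l) * \<rho> i b $$ (l,k)) = c i * P $$ (k,l) * Q $$ (k,l)"
proof -
  let ?n = "d i"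
  have rr: "is_rep sc ?n (\<rho> i)" by (rule Irr_rep[OF i])
  have e: "\<rho> i b $$ (l,k) = (\<Sum>s=0..<?n. \<Sum>r=0..<?n. P $$ (k,r) * \<rho> i (dag b) $$ (r,s) * Q $$ (s,l))" for b
  proof -
    have "\<rho> i b $$ (l,k) = contragredient dag (\<rho> i) (dag b) $$ (k,l)" using contra_entry[OF rr k l] by simp
    also have "\<dots> = (P * \<rho> i (dag b) * Q) $$ (k,l)" using iso_conj(1)[OF rr P Q PQ int] by simp
    also have "\<dots> = (\<Sum>s=0..<?n. \<Sum>r=0..<?n. P $$ (k,r) * \<rho> i (dag b) $$ (r,s) * Q $$ (s,l))" by (rule triple_entry[OF P rep_carrier[OF rr] Q k l])
    finally show ?thesis .
  qed
  have "(\<Sum>b\<in>B. \<rho> i b $$ (k,l) * \<rho> i b $$ (l,k))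
      = (\<Sum>b\<in>B. \<Sum>s=0..<?n. \<Sum>r=0..<?n. P $$ (k,r) * Q $$ (s,l) * (\<rho> i b $$ (k,l) * \<rho> i (dag b) $$ (r,s)))"
    unfolding e by (simp add: sum_distrib_left ac_simps)
  also have "\<dots> = (\<Sum>s=0..<?n. \<Sum>b\<in>B. \<Sum>r=0..<?n. P $$ (k,r) * Q $$ (s,l) * (\<rho> i b $$ (k,l) * \<rho> i (dag b) $$ (r,s)))"
    by (rule sum.swap)
  also have "\<dots> = (\<Sum>s=0..<?n. \<Sum>r=0..<?n. \<Sum>b\<in>B. P $$ (k,r) * Q $$ (s,l) * (\<rho> i b $$ (k,l) * \<rho> i (dag b) $$ (r,s)))"
    by (intro sum.cong refl sum.swap)
  also have "\<dots> = (\<Sum>s=0..<?n. \<Sum>r=0..<?n. P $$ (k,r) * Q $$ (s,l) * Tt (\<rho> i) (\<rho> i) k l r s)"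
    unfolding Tt_def by (simp add: sum_distrib_left)
  also have "\<dots> = (\<Sum>s=0..<?n. \<Sum>r=0..<?n. P $$ (k,r) * Q $$ (s,l) * (if l = r \<and> k = s then c i else 0))"
    by (intro sum.cong refl, simp add: ortho[OF i k l])
  also have "\<dots> = (\<Sum>s=0..<?n. if k = s then P $$ (k,l) * Q $$ (s,l) * c i else 0)"
    by (intro sum.cong refl) (auto simp: l if_distrib cong: if_cong)
  also have "\<dots> = c i * P $$ (k,l) * Q $$ (k,l)" using k by simp
  finally show ?thesis .
qed

end



context FS begin

lemma eps_exists: assumes i: "i \<in> I" and P: "P \<in> carrier_mat (d i) (d i)" and Q: "Q \<in> carrier_mat (d i) (d i)"
  and PQ: "P * Q = 1\<^sub>m (d i)" "Q * P = 1\<^sub>m (d i)"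
  and int: "\<And>h. P * \<rho> i h = contragredient dag (\<rho> i) h * P"
  shows "\<exists>\<epsilon>. (\<epsilon> = 1 \<or> \<epsilon> = -1) \<and> transpose_mat P = \<epsilon> \<cdot>\<^sub>m P"
proof -
  let ?n = "d i" and ?R = "\<rho> i" and ?Rh = "contragredient dag (\<rho> i)"
  have rr: "is_rep sc ?n ?R" by (rule Irr_rep[OF i])
  have n0: "0 < ?n" using Irr_simple[OF i] unfolding simple_rep_def by auto
  have Rc: "\<And>h. ?R h \<in> carrier_mat ?n ?n" by (rule rep_carrier[OF rr])
  have Rhc: "\<And>h. ?Rh h \<in> carrier_mat ?n ?n" by (rule rep_carrier[OF contra_rep[OF rr]])
  define PT where "PT = transpose_mat P"
  have PTc: "PT \<in> carrier_mat ?n ?n" unfolding PT_def using P by simp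
  have a: "PT * ?R h = ?Rh h * PT" for h
  proof -
    have "P * ?R (dag h) = transpose_mat (?R h) * P" using int[of "dag h"] unfolding contragredient_def by simp
    hence "transpose_mat (P * ?R (dag h)) = transpose_mat (transpose_mat (?R h) * P)" by simp
    moreover have "transpose_mat (P * ?R (dag h)) = transpose_mat (?R (dag h)) * PT"
      unfolding PT_def by (rule transpose_mult[OF P Rc])
    moreover have "transpose_mat (transpose_mat (?R h) * P) = PT * ?R h"
      unfolding PT_def using transpose_mult[OF _ P, of "transpose_mat (?R h)"] Rc[of h] by simp
    ultimately show ?thesis unfolding contragredient_def by simp
  qed
  define Z where "Z = Q * PT"
  have Zc: "Z \<in> carrier_mat ?n ?n" unfolding Z_def using Q PTc by simp
  have "Z * ?R h = ?R h * Z" for h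
  proof -
    have "?R h * Z = (?R h * Q) * PT" unfolding Z_def using Rc[of h] Q PTc by simp
    also have "\<dots> = (Q * ?Rh h) * PT" using iso_conj(2)[OF rr P Q PQ int] by simp
    also have "\<dots> = Q * (?Rh h * PT)" using Rhc[of h] Q PTc by simp
    also have "\<dots> = Q * (PT * ?R h)" unfolding a ..
    also have "\<dots> = Z * ?R h" unfolding Z_def using Rc[of h] Q PTc by simp
    finally show ?thesis by simp
  qed
  then obtain \<epsilon> where e: "Z = \<epsilon> \<cdot>\<^sub>m 1\<^sub>m ?n"
    using split Irr_simple[OF i] Zc unfolding split_alg_def by metis
  have PT: "PT = \<epsilon> \<cdot>\<^sub>m P"
  proof -
    have "PT = (P * Q) * PT" unfolding PQ(1) using PTc by simp
    also have "\<dots> = P * Z" unfolding Z_def using P Q PTc by simp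
    also have "\<dots> = \<epsilon> \<cdot>\<^sub>m P" unfolding e using P by (simp add: mult_smult_distrib[OF P one_carrier_mat])
    finally show ?thesis .
  qed
  have "P $$ (k,l) = (\<epsilon> * \<epsilon>) * P $$ (k,l)" if "k < ?n" "l < ?n" for k l
  proof -
    have "P $$ (k,l) = PT $$ (l,k)" unfolding PT_def using P that by simp
    also have "\<dots> = \<epsilon> * P $$ (l,k)" unfolding PT using P that by simp
    also have "P $$ (l,k) = PT $$ (k,l)" unfolding PT_def using P that by simp
    also have "\<dots> = \<epsilon> * P $$ (k,l)" unfolding PT using P that by simp
    finally show ?thesis by simp
  qed
  moreover have "\<exists>k l. k < ?n \<and> l < ?n \<and> P $$ (k,l) \<noteq> 0"
  proof (rule ccontr)
    assume "\<not> ?thesis"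
    hence "P = 0\<^sub>m ?n ?n" using P by (intro eq_matI) auto
    hence "P * Q = 0\<^sub>m ?n ?n" using Q by simp
    hence "(1\<^sub>m ?n :: 'k mat) $$ (0,0) = 0" using PQ(1) n0 by simp
    thus False using n0 by simp
  qed
  ultimately have "\<epsilon> * \<epsilon> = 1" by force
  hence "\<epsilon> = 1 \<or> \<epsilon> = -1" by (simp add: square_eq_1_iff)
  thus ?thesis using PT unfolding PT_def by blast
qed

lemma iso_chi: assumes i: "i \<in> I" and P: "P \<in> carrier_mat (d i) (d i)" and Q: "Q \<in> carrier_mat (d i) (d i)"
  and PQ: "P * Q = 1\<^sub>m (d i)" "Q * P = 1\<^sub>m (d i)"
  and int: "\<And>h. P * \<rho> i h = contragredient dag (\<rho> i) h * P"
  and eps: "transpose_mat P = \<epsilon> \<cdot>\<^sub>m P"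
  shows "(\<Sum>b\<in>B. mat_trace (\<rho> i (b * b))) = c i * \<epsilon> * of_nat (d i)"
proof -
  let ?n = "d i"
  have rr: "is_rep sc ?n (\<rho> i)" by (rule Irr_rep[OF i])
  have "(\<Sum>l<?n. \<Sum>b\<in>B. \<rho> i b $$ (k,l) * \<rho> i b $$ (l,k)) = c i * \<epsilon>" if k: "k < ?n" for k
  proof -
    have "(\<Sum>l<?n. \<Sum>b\<in>B. \<rho> i b $$ (k,l) * \<rho> i b $$ (l,k)) = (\<Sum>l<?n. c i * P $$ (k,l) * Q $$ (k,l))"
      by (intro sum.cong refl iso_entry_sum[OF i P Q PQ int k]) simp
    also have "\<dots> = (\<Sum>l<?n. c i * \<epsilon> * (Q $$ (k,l) * P $$ (l,k)))"
    proof (intro sum.cong refl)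
      fix l assume "l \<in> {..<?n}" hence l: "l < ?n" by simp
      have "P $$ (k,l) = transpose_mat P $$ (l,k)" using P k l by simp
      also have "\<dots> = \<epsilon> * P $$ (l,k)" unfolding eps using P k l by simp
      finally show "c i * P $$ (k,l) * Q $$ (k,l) = c i * \<epsilon> * (Q $$ (k,l) * P $$ (l,k))" by simp
    qed
    also have "\<dots> = c i * \<epsilon> * (Q * P) $$ (k,k)"
      using P Q k by (simp add: scalar_prod_def sum_distrib_left atLeast0LessThan)
    also have "\<dots> = c i * \<epsilon>" unfolding PQ(2) using k by simp
    finally show ?thesis .
  qed
  thus ?thesis unfolding chi_sum[OF rr] by simp
qed

lemma nu_val: assumes i: "i \<in> I" and s: "(\<Sum>b\<in>B. mat_trace (\<rho> i (b * b))) = c i * \<epsilon> * of_nat (d i)"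
  shows "nu B (c i) (d i) (\<rho> i) = \<epsilon>"
proof -
  have n0: "0 < d i" using Irr_simple[OF i] unfolding simple_rep_def by auto
  show ?thesis unfolding nu_def s using schur_nz[OF i] n0 by (simp add: field_simps)
qed

end



lemma entry_bform: assumes A: "(A :: 'a :: field mat) \<in> carrier_mat n n" and k: "k < n" and l: "l < n"
  shows "A $$ (k,l) = unit_vec n k \<bullet> (A *\<^sub>v unit_vec n l)"
proof -
  have "A *\<^sub>v unit_vec n l \<in> carrier_vec n" using A by simp
  hence "unit_vec n k \<bullet> (A *\<^sub>v unit_vec n l) = (A *\<^sub>v unit_vec n l) $ k" using k by simp
  also have "\<dots> = A $$ (k,l)" by (rule mult_unit_entry[OF A k l])
  finally show ?thesis by simp
qed

lemma adjoint: assumes A: "(A :: 'a :: field mat) \<in> carrier_mat n n" and x: "x \<in> carrier_vec n" and z: "z \<in> carrier_vec n"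
  shows "(A *\<^sub>v x) \<bullet> z = x \<bullet> (transpose_mat A *\<^sub>v z)"
proof -
  have "(A *\<^sub>v x) \<bullet> z = z \<bullet> (A *\<^sub>v x)" using A x z by (intro comm_scalar_prod) auto
  also have "\<dots> = (transpose_mat A *\<^sub>v z) \<bullet> x" using transpose_vec_mult_scalar[OF A x z] by simp
  also have "\<dots> = x \<bullet> (transpose_mat A *\<^sub>v z)" using A x z by (intro comm_scalar_prod) auto
  finally show ?thesis .
qed

lemma N1: assumes P: "(P :: 'a :: field mat) \<in> carrier_mat n n" and Q: "Q \<in> carrier_mat n n" and PQ: "P * Q = 1\<^sub>m n"
  shows "nondegenerate_form n P"
  unfolding nondegenerate_form_def
proof (intro ballI impI)
  fix v :: "'a vec" assume v: "v \<in> carrier_vec n" and h: "\<forall>w\<in>carrier_vec n. bform P v w = 0"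
  show "v = 0\<^sub>v n"
  proof (rule vec_zero_if_unit[OF v])
    fix k assume k: "k < n"
    have "bform P v (Q *\<^sub>v unit_vec n k) = 0" using h Q by simp
    moreover have "P *\<^sub>v (Q *\<^sub>v unit_vec n k) = unit_vec n k"
      using P Q PQ by (simp flip: assoc_mult_mat_vec)
    ultimately show "v \<bullet> unit_vec n k = 0" unfolding bform_def by simp
  qed
qed

lemma N2: assumes M: "(M :: 'a :: field mat) \<in> carrier_mat n n" and nd: "nondegenerate_form n M"
  shows "det M \<noteq> 0"
proof
  assume "det M = 0"
  hence "det (transpose_mat M) = 0" using det_transpose[OF M] by simp
  then obtain v where v: "v \<in> carrier_vec n" "v \<noteq> 0\<^sub>v n" "transpose_mat M *\<^sub>v v = 0\<^sub>v n"
    using det_0_iff_vec_prod_zero_field[of "transpose_mat M" n] M by auto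
  have "\<forall>w\<in>carrier_vec n. bform M v w = 0"
  proof
    fix w :: "'a vec" assume w: "w \<in> carrier_vec n"
    have "bform M v w = (transpose_mat M *\<^sub>v v) \<bullet> w" unfolding bform_def
      using transpose_vec_mult_scalar[OF M w v(1)] by simp
    thus "bform M v w = 0" using v(3) w by simp
  qed
  with nd v show False unfolding nondegenerate_form_def by auto
qed

lemma sym_of_transpose: assumes P: "(P :: 'a :: field mat) \<in> carrier_mat n n" and T: "transpose_mat P = P"
  shows "symmetric_form n P"
  unfolding symmetric_form_def bform_def
proof (intro ballI)
  fix v w :: "'a vec" assume v: "v \<in> carrier_vec n" and w: "w \<in> carrier_vec n"
  have "v \<bullet> (P *\<^sub>v w) = (transpose_mat P *\<^sub>v v) \<bullet> w" using transpose_vec_mult_scalar[OF P w v] by simp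
  also have "\<dots> = w \<bullet> (P *\<^sub>v v)" unfolding T using P v w by (intro comm_scalar_prod) auto
  finally show "v \<bullet> (P *\<^sub>v w) = w \<bullet> (P *\<^sub>v v)" .
qed

lemma transpose_of_sym: assumes M: "(M :: 'a :: field mat) \<in> carrier_mat n n" and S: "symmetric_form n M"
  shows "transpose_mat M = M"
proof (rule eq_matI)
  fix k l assume "k < dim_row M" "l < dim_col M"
  hence kl: "k < n" "l < n" using M by auto
  have "M $$ (l,k) = bform M (unit_vec n l) (unit_vec n k)" unfolding bform_def by (rule entry_bform[OF M kl(2,1)])
  also have "\<dots> = bform M (unit_vec n k) (unit_vec n l)" using S unfolding symmetric_form_def by simp
  also have "\<dots> = M $$ (k,l)" unfolding bform_def by (rule entry_bform[OF M kl, symmetric])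
  finally show "transpose_mat M $$ (k,l) = M $$ (k,l)" using kl M by simp
qed (use M in auto)

lemma alt_of_transpose: assumes P: "(P :: 'a :: field_char_0 mat) \<in> carrier_mat n n" and T: "transpose_mat P = (-1) \<cdot>\<^sub>m P"
  shows "alternating_form n P"
  unfolding alternating_form_def bform_def
proof (intro ballI)
  fix v :: "'a vec" assume v: "v \<in> carrier_vec n"
  have "v \<bullet> (P *\<^sub>v v) = (transpose_mat P *\<^sub>v v) \<bullet> v" using transpose_vec_mult_scalar[OF P v v] by simp
  also have "(transpose_mat P *\<^sub>v v) = - (P *\<^sub>v v)" unfolding T using P v
    by (intro eq_vecI) (auto simp: scalar_prod_def sum_negf)
  also have "(- (P *\<^sub>v v)) \<bullet> v = - ((P *\<^sub>v v) \<bullet> v)" using P v by simp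
  also have "(P *\<^sub>v v) \<bullet> v = v \<bullet> (P *\<^sub>v v)" using P v by (intro comm_scalar_prod) auto
  finally have "v \<bullet> (P *\<^sub>v v) = - (v \<bullet> (P *\<^sub>v v))" .
  thus "v \<bullet> (P *\<^sub>v v) = 0" by simp
qed

lemma transpose_of_alt: assumes M: "(M :: 'a :: field mat) \<in> carrier_mat n n" and A: "alternating_form n M"
  shows "transpose_mat M = (-1) \<cdot>\<^sub>m M"
proof (rule eq_matI)
  fix k l assume "k < dim_row ((-1) \<cdot>\<^sub>m M)" "l < dim_col ((-1) \<cdot>\<^sub>m M)"
  hence kl: "k < n" "l < n" using M by auto
  let ?ek = "unit_vec n k" and ?el = "unit_vec n l"
  have c: "?ek \<in> carrier_vec n" "?el \<in> carrier_vec n" "M *\<^sub>v ?ek \<in> carrier_vec n" "M *\<^sub>v ?el \<in> carrier_vec n"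
    using M by auto
  have "0 = bform M (?ek + ?el) (?ek + ?el)" using A c unfolding alternating_form_def by simp
  also have "\<dots> = ?ek \<bullet> (M *\<^sub>v ?ek) + ?ek \<bullet> (M *\<^sub>v ?el) + (?el \<bullet> (M *\<^sub>v ?ek) + ?el \<bullet> (M *\<^sub>v ?el))"
    unfolding bform_def using c
    by (simp add: mult_add_distrib_mat_vec[OF M] add_scalar_prod_distrib[of _ n] scalar_prod_add_distrib[of _ n])
  also have "?ek \<bullet> (M *\<^sub>v ?ek) = 0" using A c unfolding alternating_form_def bform_def by simp
  also have "?el \<bullet> (M *\<^sub>v ?el) = 0" using A c unfolding alternating_form_def bform_def by simp
  also have "?ek \<bullet> (M *\<^sub>v ?el) = M $$ (k,l)" by (rule entry_bform[OF M kl, symmetric])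
  also have "?el \<bullet> (M *\<^sub>v ?ek) = M $$ (l,k)" by (rule entry_bform[OF M kl(2,1), symmetric])
  finally have "M $$ (l,k) = - M $$ (k,l)" by (simp add: eq_neg_iff_add_eq_0 add.commute)
  thus "transpose_mat M $$ (k,l) = ((-1) \<cdot>\<^sub>m M) $$ (k,l)" using kl M by simp
qed (use M in auto)

context FS begin

lemma F1: assumes r: "is_rep sc n R" and P: "P \<in> carrier_mat n n"
  and int: "\<And>h. P * R h = contragredient dag R h * P"
  shows "invariant_form dag n R P"
  unfolding invariant_form_def bform_def
proof (intro allI ballI)
  fix h and v w :: "'k vec" assume v: "v \<in> carrier_vec n" and w: "w \<in> carrier_vec n"
  have Rc: "R h \<in> carrier_mat n n" by (rule rep_carrier[OF r])
  have "v \<bullet> (P *\<^sub>v (R (dag h) *\<^sub>v w)) = v \<bullet> ((P * R (dag h)) *\<^sub>v w)"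
    using P rep_carrier[OF r, of "dag h"] w by simp
  also have "P * R (dag h) = transpose_mat (R h) * P" using int[of "dag h"] unfolding contragredient_def by simp
  also have "v \<bullet> ((transpose_mat (R h) * P) *\<^sub>v w) = v \<bullet> (transpose_mat (R h) *\<^sub>v (P *\<^sub>v w))"
    using P Rc w by simp
  also have "\<dots> = (R h *\<^sub>v v) \<bullet> (P *\<^sub>v w)" using adjoint[OF Rc v, of "P *\<^sub>v w"] P w by simp
  finally show "(R h *\<^sub>v v) \<bullet> (P *\<^sub>v w) = v \<bullet> (P *\<^sub>v (R (dag h) *\<^sub>v w))" by simp
qed

lemma F2: assumes r: "is_rep sc n R" and M: "M \<in> carrier_mat n n"
  and inv: "invariant_form dag n R M"
  shows "M * R h = contragredient dag R h * M"
proof (rule eq_matI)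
  have Rc: "\<And>h. R h \<in> carrier_mat n n" by (rule rep_carrier[OF r])
  fix k l assume "k < dim_row (contragredient dag R h * M)" "l < dim_col (contragredient dag R h * M)"
  hence kl: "k < n" "l < n" using M Rc[of "dag h"] unfolding contragredient_def by auto
  let ?ek = "unit_vec n k" and ?el = "unit_vec n l"
  have "(M * R h) $$ (k,l) = ?ek \<bullet> ((M * R h) *\<^sub>v ?el)" by (rule entry_bform[OF _ kl], use M Rc in simp)
  also have "\<dots> = bform M ?ek (R (dag (dag h)) *\<^sub>v ?el)" unfolding bform_def using M Rc[of h] by simp
  also have "\<dots> = bform M (R (dag h) *\<^sub>v ?ek) ?el" using inv unfolding invariant_form_def by simp
  also have "\<dots> = ?ek \<bullet> (transpose_mat (R (dag h)) *\<^sub>v (M *\<^sub>v ?el))"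
    unfolding bform_def by (rule adjoint[OF Rc], use M in auto)
  also have "\<dots> = ?ek \<bullet> ((contragredient dag R h * M) *\<^sub>v ?el)"
    unfolding contragredient_def using M Rc[of "dag h"] by simp
  also have "\<dots> = (contragredient dag R h * M) $$ (k,l)"
    by (rule entry_bform[OF _ kl, symmetric], use M Rc[of "dag h"] in \<open>simp add: contragredient_def\<close>)
  finally show "(M * R h) $$ (k,l) = (contragredient dag R h * M) $$ (k,l)" .
qed (use M rep_carrier[OF r, of "dag h"] rep_carrier[OF r, of h] in \<open>auto simp: contragredient_def\<close>)

end



context FS begin
lemma nu_of_intertwiner: assumes i: "i \<in> I" and M: "M \<in> carrier_mat (d i) (d i)"
  and dM: "det M \<noteq> 0"
  and int: "\<And>h. M * \<rho> i h = contragredient dag (\<rho> i) h * M"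
  and T: "transpose_mat M = e \<cdot>\<^sub>m M"
  shows "nu B (c i) (d i) (\<rho> i) = e"
proof -
  obtain Q where Q: "Q \<in> carrier_mat (d i) (d i)" "M * Q = 1\<^sub>m (d i)" "Q * M = 1\<^sub>m (d i)"
    using det_inverse[OF M dM] by blast
  show ?thesis by (rule nu_val[OF i iso_chi[OF i M Q(1) Q(2,3) int T]])
qed

lemma nu_noniso: assumes i: "i \<in> I"
  and ni: "\<not> rep_iso (d i) (\<rho> i) (d i) (contragredient dag (\<rho> i))"
  shows "nu B (c i) (d i) (\<rho> i) = 0"
  unfolding nu_def noniso_sum[OF i ni] by simp
end

lemma smult_one_mat_eq: "(1::'a::field) \<cdot>\<^sub>m M = M"
  by (intro eq_matI) auto

theorem proposition2p5:
  fixes sc :: "'k::field_char_0 \<Rightarrow> 'h::ring_1 \<Rightarrow> 'h"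
    and \<tau> :: "'h \<Rightarrow> 'k" and dag :: "'h \<Rightarrow> 'h" and B0 :: "'h set"
    and I :: "'i set" and d :: "'i \<Rightarrow> nat" and \<rho> :: "'i \<Rightarrow> 'h \<Rightarrow> 'k mat"
    and c :: "'i \<Rightarrow> 'k" and i :: 'i
  assumes alg: "is_K_algebra sc"
    and ss: "semisimple_alg sc" and split: "split_alg sc"
    and sym: "symmetrizing_trace sc \<tau>"
    and dag: "anti_involution sc dag"
    and B0: "finite B0" "dag_symmetric_basis sc \<tau> dag B0"
    and Irr_simple: "\<And>j. j \<in> I \<Longrightarrow> simple_rep sc (d j) (\<rho> j)"
    and Irr_distinct: "\<And>j k. j \<in> I \<Longrightarrow> k \<in> I \<Longrightarrow> j \<noteq> k \<Longrightarrow> \<not> rep_iso (d j) (\<rho> j) (d k) (\<rho> k)"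
    and Irr_complete: "\<And>n \<sigma>. simple_rep sc n \<sigma> \<Longrightarrow> \<exists>j\<in>I. rep_iso n \<sigma> (d j) (\<rho> j)"
    and Irr_finite: "finite I"
    and schur_nz: "\<And>j. j \<in> I \<Longrightarrow> c j \<noteq> 0"
    and schur: "\<And>h. \<tau> h = (\<Sum>j\<in>I. mat_trace (\<rho> j h) / c j)"
    and i: "i \<in> I"
  shows "nu B0 (c i) (d i) (\<rho> i) \<in> {0, 1, -1}
    \<and> (nu B0 (c i) (d i) (\<rho> i) = 0 \<longleftrightarrow>
         \<not> rep_iso (d i) (\<rho> i) (d i) (contragredient dag (\<rho> i)))
    \<and> (nu B0 (c i) (d i) (\<rho> i) = 1 \<longleftrightarrow>
         rep_iso (d i) (\<rho> i) (d i) (contragredient dag (\<rho> i)) \<and>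
         (\<exists>M \<in> carrier_mat (d i) (d i). nondegenerate_form (d i) M \<and>
            symmetric_form (d i) M \<and> invariant_form dag (d i) (\<rho> i) M))
    \<and> (nu B0 (c i) (d i) (\<rho> i) = -1 \<longleftrightarrow>
         rep_iso (d i) (\<rho> i) (d i) (contragredient dag (\<rho> i)) \<and>
         (\<exists>M \<in> carrier_mat (d i) (d i). nondegenerate_form (d i) M \<and>
            alternating_form (d i) M \<and> invariant_form dag (d i) (\<rho> i) M))
    \<and> (\<forall>B1. finite B1 \<and> dag_symmetric_basis sc \<tau> dag B1 \<longrightarrow>
         nu B1 (c i) (d i) (\<rho> i) = nu B0 (c i) (d i) (\<rho> i))"
proof -
  have F: "FS sc \<tau> dag B I d \<rho> c" if "finite B" "dag_symmetric_basis sc \<tau> dag B" for B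
    unfolding FS_def FSalg_def FS_axioms_def
    using that alg split sym dag Irr_simple Irr_distinct Irr_finite schur_nz schur by blast
  interpret F0: FS sc \<tau> dag B0 I d \<rho> c by (rule F[OF B0])
  let ?n = "d i" and ?R = "\<rho> i" and ?Rh = "contragredient dag (\<rho> i)"
  let ?E = "rep_iso ?n ?R ?n ?Rh"
  let ?nu = "nu B0 (c i) (d i) (\<rho> i)"
  have rr: "is_rep sc ?n ?R" by (rule F0.Irr_rep[OF i])
  have n0: "0 < ?n" using Irr_simple[OF i] unfolding simple_rep_def by auto
  have formI: "det M \<noteq> 0 \<and> (\<forall>h. M * ?R h = ?Rh h * M)"
    if M: "M \<in> carrier_mat ?n ?n" "nondegenerate_form ?n M" "invariant_form dag ?n ?R M" for M
    using N2[OF M(1,2)] F0.F2[OF rr M(1,3)] by blast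
  show ?thesis
  proof (cases ?E)
    case False
    have nu0: "nu B (c i) (d i) (\<rho> i) = 0" if "finite B" "dag_symmetric_basis sc \<tau> dag B" for B
      using FS.nu_noniso[OF F[OF that] i False] .
    show ?thesis using nu0[OF B0] nu0 False by auto
  next
    case True
    then obtain P where P: "P \<in> carrier_mat ?n ?n" "invertible_mat P" "\<And>h. P * ?R h = ?Rh h * P"
      unfolding rep_iso_def by blast
    obtain Q where Q: "Q \<in> carrier_mat ?n ?n" "P * Q = 1\<^sub>m ?n" "Q * P = 1\<^sub>m ?n"
      using inv_of[OF P(1,2)] by blast
    obtain \<epsilon> where e: "\<epsilon> = 1 \<or> \<epsilon> = -1" "transpose_mat P = \<epsilon> \<cdot>\<^sub>m P"
      using F0.eps_exists[OF i P(1) Q(1) Q(2,3) P(3)] by blast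
    have nuB: "nu B (c i) (d i) (\<rho> i) = \<epsilon>" if "finite B" "dag_symmetric_basis sc \<tau> dag B" for B
      using FS.nu_val[OF F[OF that] i FS.iso_chi[OF F[OF that] i P(1) Q(1) Q(2,3) P(3) e(2)]] .
    have nu: "?nu = \<epsilon>" by (rule nuB[OF B0])
    have Pnd: "nondegenerate_form ?n P" by (rule N1[OF P(1) Q(1,2)])
    have Pinv: "invariant_form dag ?n ?R P" by (rule F0.F1[OF rr P(1) P(3)])
    have c1: "?nu = 1 \<longleftrightarrow> ?E \<and> (\<exists>M \<in> carrier_mat ?n ?n. nondegenerate_form ?n M \<and>
            symmetric_form ?n M \<and> invariant_form dag ?n ?R M)"
    proof
      assume "?nu = 1"
      hence "transpose_mat P = P" using e nu by (simp add: smult_one_mat_eq)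
      hence "symmetric_form ?n P" by (rule sym_of_transpose[OF P(1)])
      thus "?E \<and> (\<exists>M \<in> carrier_mat ?n ?n. nondegenerate_form ?n M \<and>
            symmetric_form ?n M \<and> invariant_form dag ?n ?R M)" using True P(1) Pnd Pinv by blast
    next
      assume "?E \<and> (\<exists>M \<in> carrier_mat ?n ?n. nondegenerate_form ?n M \<and>
            symmetric_form ?n M \<and> invariant_form dag ?n ?R M)"
      then obtain M where M: "M \<in> carrier_mat ?n ?n" "nondegenerate_form ?n M"
        "symmetric_form ?n M" "invariant_form dag ?n ?R M" by blast
      have fi: "det M \<noteq> 0" "\<And>h. M * ?R h = ?Rh h * M" using formI[OF M(1,2,4)] by auto
      have "transpose_mat M = 1 \<cdot>\<^sub>m M" using transpose_of_sym[OF M(1,3)] by (simp add: smult_one_mat_eq)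
      thus "?nu = 1" by (rule F0.nu_of_intertwiner[OF i M(1) fi])
    qed
    have c2: "?nu = -1 \<longleftrightarrow> ?E \<and> (\<exists>M \<in> carrier_mat ?n ?n. nondegenerate_form ?n M \<and>
            alternating_form ?n M \<and> invariant_form dag ?n ?R M)"
    proof
      assume "?nu = -1"
      hence "transpose_mat P = (-1) \<cdot>\<^sub>m P" using e nu by simp
      hence "alternating_form ?n P" by (rule alt_of_transpose[OF P(1)])
      thus "?E \<and> (\<exists>M \<in> carrier_mat ?n ?n. nondegenerate_form ?n M \<and>
            alternating_form ?n M \<and> invariant_form dag ?n ?R M)" using True P(1) Pnd Pinv by blast
    next
      assume "?E \<and> (\<exists>M \<in> carrier_mat ?n ?n. nondegenerate_form ?n M \<and>
            alternating_form ?n M \<and> invariant_form dag ?n ?R M)"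
      then obtain M where M: "M \<in> carrier_mat ?n ?n" "nondegenerate_form ?n M"
        "alternating_form ?n M" "invariant_form dag ?n ?R M" by blast
      have fi: "det M \<noteq> 0" "\<And>h. M * ?R h = ?Rh h * M" using formI[OF M(1,2,4)] by auto
      have "transpose_mat M = (-1) \<cdot>\<^sub>m M" by (rule transpose_of_alt[OF M(1,3)])
      thus "?nu = -1" by (rule F0.nu_of_intertwiner[OF i M(1) fi])
    qed
    have c0: "?nu \<in> {0, 1, -1}" "?nu \<noteq> 0" using e nu by auto
    show ?thesis using c0 c1 c2 True nuB nu by auto
  qed
qed


end
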